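(* Let $G$ be a strongly Deza graph with parameters $(n,k,b,a)$ having exactly four distinct eigenvalues $k,\theta_2,\theta_3,\theta_4$ with multiplicities $1,m_2,m_3,m_4$ (all positive), where $\theta_4=-\theta_3$ and $m_3=m_4$. Then $\theta_2=-k/m_2$ is an integer with $\theta_2\leqslant -1$, and $$\theta_{3,4}=\pm\sqrt{k\left(1+\frac{(\theta_2+1)(m_2+1)}{n-m_2-1}\right)}.$$
   Context: All graphs are finite, simple and undirected; eigenvalues of a graph are those of its adjacency matrix. A Deza graph with parameters $(n,k,b,a)$, where $b\geqslant a$, is a $k$-regular graph on $n$ vertices, which is neither complete nor edgeless, such that any two distinct vertices have exactly $b$ or exactly $a$ common neighbours. If $b>a$, the children $G_A$ and $G_B$ of $G$ are the graphs on the vertex set of $G$ in which two distinct vertices are adjacent if and only if they have exactly $a$ (for $G_A$), respectively exactly $b$ (for $G_B$), common neighbours in $G$; if $b=a$, $G_A$ is the complete graph and $G_B$ is the edgeless graph. A strongly regular graph with parameters $(n,k,\lambda,\mu)$ is a $k$-regular graph on $n$ vertices, neither complete nor edgeless, in which any two adjacent vertices have exactly $\lambda$ common neighbours and any two distinct non-adjacent vertices have exactly $\mu$ common neighbours (disconnected examples, i.e. disjoint unions of at least two cliques of equal size, are allowed). A strongly Deza graph is a Deza graph both of whose children are strongly regular graphs. *)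

theory Defs
  imports "Jordan_Normal_Form.Char_Poly"
begin

definition simple_graph :: "nat \<Rightarrow> (nat \<Rightarrow> nat \<Rightarrow> bool) \<Rightarrow> bool" where
  "simple_graph n E \<longleftrightarrow>
     (\<forall>u v. E u v \<longrightarrow> u < n \<and> v < n) \<and>
     (\<forall>u v. E u v \<longrightarrow> E v u) \<and> (\<forall>u. \<not> E u u)"

definition common_nbrs :: "nat \<Rightarrow> (nat \<Rightarrow> nat \<Rightarrow> bool) \<Rightarrow> nat \<Rightarrow> nat \<Rightarrow> nat" where
  "common_nbrs n E u v = card {w. w < n \<and> E u w \<and> E v w}"

definition regular :: "nat \<Rightarrow> (nat \<Rightarrow> nat \<Rightarrow> bool) \<Rightarrow> nat \<Rightarrow> bool" where
  "regular n E k \<longleftrightarrow> (\<forall>u<n. card {v. v < n \<and> E u v} = k)"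

definition complete_graph :: "nat \<Rightarrow> (nat \<Rightarrow> nat \<Rightarrow> bool) \<Rightarrow> bool" where
  "complete_graph n E \<longleftrightarrow> (\<forall>u<n. \<forall>v<n. u \<noteq> v \<longrightarrow> E u v)"

definition edgeless :: "(nat \<Rightarrow> nat \<Rightarrow> bool) \<Rightarrow> bool" where
  "edgeless E \<longleftrightarrow> (\<forall>u v. \<not> E u v)"

definition deza_graph :: "nat \<Rightarrow> (nat \<Rightarrow> nat \<Rightarrow> bool) \<Rightarrow> nat \<Rightarrow> nat \<Rightarrow> nat \<Rightarrow> bool" where
  "deza_graph n E k b a \<longleftrightarrow>
     simple_graph n E \<and> regular n E k \<and> b \<ge> a \<and>
     \<not> complete_graph n E \<and> \<not> edgeless E \<and>
     (\<forall>u<n. \<forall>v<n. u \<noteq> v \<longrightarrow> common_nbrs n E u v = b \<or> common_nbrs n E u v = a)"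

definition child_A :: "nat \<Rightarrow> (nat \<Rightarrow> nat \<Rightarrow> bool) \<Rightarrow> nat \<Rightarrow> nat \<Rightarrow> nat \<Rightarrow> nat \<Rightarrow> bool" where
  "child_A n E b a u v \<longleftrightarrow> u < n \<and> v < n \<and> u \<noteq> v \<and>
     (if b > a then common_nbrs n E u v = a else True)"

definition child_B :: "nat \<Rightarrow> (nat \<Rightarrow> nat \<Rightarrow> bool) \<Rightarrow> nat \<Rightarrow> nat \<Rightarrow> nat \<Rightarrow> nat \<Rightarrow> bool" where
  "child_B n E b a u v \<longleftrightarrow> u < n \<and> v < n \<and> u \<noteq> v \<and>
     (if b > a then common_nbrs n E u v = b else False)"

definition srg :: "nat \<Rightarrow> (nat \<Rightarrow> nat \<Rightarrow> bool) \<Rightarrow> nat \<Rightarrow> nat \<Rightarrow> nat \<Rightarrow> bool" where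
  "srg n E k lam mu \<longleftrightarrow>
     simple_graph n E \<and> regular n E k \<and>
     \<not> complete_graph n E \<and> \<not> edgeless E \<and>
     (\<forall>u<n. \<forall>v<n. u \<noteq> v \<longrightarrow> E u v \<longrightarrow> common_nbrs n E u v = lam) \<and>
     (\<forall>u<n. \<forall>v<n. u \<noteq> v \<longrightarrow> \<not> E u v \<longrightarrow> common_nbrs n E u v = mu)"

definition is_srg :: "nat \<Rightarrow> (nat \<Rightarrow> nat \<Rightarrow> bool) \<Rightarrow> bool" where
  "is_srg n E \<longleftrightarrow> (\<exists>k lam mu. srg n E k lam mu)"

definition strongly_deza :: "nat \<Rightarrow> (nat \<Rightarrow> nat \<Rightarrow> bool) \<Rightarrow> nat \<Rightarrow> nat \<Rightarrow> nat \<Rightarrow> bool" where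
  "strongly_deza n E k b a \<longleftrightarrow>
     deza_graph n E k b a \<and> is_srg n (child_A n E b a) \<and> is_srg n (child_B n E b a)"

definition adj_matrix :: "nat \<Rightarrow> (nat \<Rightarrow> nat \<Rightarrow> bool) \<Rightarrow> real mat" where
  "adj_matrix n E = mat n n (\<lambda>(i, j). if E i j then 1 else 0)"

definition eig_mult :: "real mat \<Rightarrow> real \<Rightarrow> nat" where
  "eig_mult A \<theta> = order \<theta> (char_poly A)"

end

theory Submission
  imports Defs "Jordan_Normal_Form.Schur_Decomposition"
begin


lemma real_sym_eig_real:
  fixes A :: "real mat"
  assumes A: "A \<in> carrier_mat n n"
    and sym: "\<And>i j. i < n \<Longrightarrow> j < n \<Longrightarrow> A $$ (i,j) = A $$ (j,i)"
    and ev: "eigenvalue (map_mat complex_of_real A) c"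
  shows "Im c = 0"
proof -
  let ?A = "map_mat complex_of_real A"
  from ev obtain v where v: "v \<in> carrier_vec n" "v \<noteq> 0\<^sub>v n" "?A *\<^sub>v v = c \<cdot>\<^sub>v v"
    unfolding eigenvalue_def eigenvector_def using A by auto
  have Av: "(?A *\<^sub>v v) $ i = (\<Sum>j<n. complex_of_real (A $$ (i,j)) * v $ j)" if "i < n" for i
    using that A v(1) by (auto simp: mult_mat_vec_def scalar_prod_def row_def lessThan_atLeast0 intro!: sum.cong)
  define N where "N = (\<Sum>i<n. cnj (v $ i) * v $ i)"
  have S1: "(\<Sum>i<n. cnj (v $ i) * (?A *\<^sub>v v) $ i) = c * N"
    unfolding N_def v(3) sum_distrib_left using v(1) by (auto intro!: sum.cong)
  have "(\<Sum>i<n. cnj (v $ i) * (?A *\<^sub>v v) $ i) = (\<Sum>i<n. \<Sum>j<n. cnj (v $ i) * complex_of_real (A $$ (i,j)) * v $ j)"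
    by (simp add: Av sum_distrib_left mult.assoc)
  also have "\<dots> = (\<Sum>j<n. \<Sum>i<n. cnj (v $ i) * complex_of_real (A $$ (i,j)) * v $ j)"
    by (rule sum.swap)
  also have "\<dots> = (\<Sum>j<n. v $ j * cnj ((?A *\<^sub>v v) $ j))"
    by (auto simp: Av sum_distrib_left sum_distrib_right sym intro!: sum.cong)
  also have "\<dots> = cnj c * N"
    unfolding N_def v(3) sum_distrib_left using v(1) by (auto intro!: sum.cong)
  finally have eq: "c * N = cnj c * N" using S1 by simp
  from v obtain i where i: "i < n" "v $ i \<noteq> 0" by (metis eq_vecI carrier_vecD index_zero_vec(1,2))
  have Nr: "N = complex_of_real (\<Sum>i<n. (cmod (v $ i))^2)"
    unfolding N_def by (simp add: complex_mult_cnj cmod_power2 mult.commute)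
  have "(\<Sum>i<n. (cmod (v $ i))^2) > 0"
    using i by (intro sum_pos2[of _ i]) auto
  hence "N \<noteq> 0" unfolding Nr by (metis of_real_eq_0_iff less_irrefl)
  with eq have "c = cnj c" by simp
  thus ?thesis by (metis complex_cnj_cancel_iff complex.expand cnj.simps(1,2) neg_equal_zero)
qed



lemma real_sym_split:
  fixes A :: "real mat"
  assumes A: "A \<in> carrier_mat n n"
    and sym: "\<And>i j. i < n \<Longrightarrow> j < n \<Longrightarrow> A $$ (i,j) = A $$ (j,i)"
  shows "\<exists>rs. char_poly A = (\<Prod>r\<leftarrow>rs. [:- r, 1:]) \<and> length rs = n"
proof -
  interpret hp: map_poly_inj_comm_ring_hom complex_of_real ..
  let ?A = "map_mat complex_of_real A"
  have Ac: "?A \<in> carrier_mat n n" using A by simp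
  have cp: "char_poly ?A = map_poly complex_of_real (char_poly A)"
    by (rule of_real_hom.char_poly_hom[OF A])
  obtain as where as: "char_poly ?A = (\<Prod>a\<leftarrow>as. [:- a, 1:])" "length as = n"
    using char_poly_factorized[OF Ac] by blast
  have real: "a = complex_of_real (Re a)" if "a \<in> set as" for a
  proof -
    have "poly (char_poly ?A) a = 0" unfolding as(1) using that
      by (simp add: poly_prod_list prod_list_zero_iff)
    hence "eigenvalue ?A a" using eigenvalue_root_char_poly[OF Ac] by simp
    hence "Im a = 0" using real_sym_eig_real[OF A sym, of a] by simp
    thus ?thesis by (simp add: complex_eq_iff)
  qed
  define rs where "rs = map Re as"
  have asr: "as = map complex_of_real rs" unfolding rs_def using real
    by (induct as) auto
  have "map_poly complex_of_real (\<Prod>r\<leftarrow>rs. [:- r, 1:]) = (\<Prod>a\<leftarrow>as. [:- a, 1:])"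
    unfolding asr by (induct rs) (auto simp: hp.hom_mult simp del: mult_pCons_left)
  hence "map_poly complex_of_real (\<Prod>r\<leftarrow>rs. [:- r, 1:]) = map_poly complex_of_real (char_poly A)"
    using as cp by simp
  hence "char_poly A = (\<Prod>r\<leftarrow>rs. [:- r, 1:])" by (simp only: hp.eq_iff)
  moreover have "length rs = n" using as(2) unfolding rs_def by simp
  ultimately show ?thesis by blast
qed

lemma order_linear_prod:
  fixes rs :: "'a :: idom list"
  shows "Polynomial.order a (\<Prod>r\<leftarrow>rs. [:- r, 1:]) = count_list rs a"
proof (induct rs)
  case Nil thus ?case by simp
next
  case (Cons r rs)
  have nz: "(\<Prod>r\<leftarrow>rs. [:- r, 1:]) \<noteq> 0" by (auto simp add: prod_list_zero_iff)
  have o1: "Polynomial.order a [:- r, 1:] = (if a = r then 1 else 0)"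
  proof (cases "a = r")
    case True thus ?thesis using order_power_n_n[of a 1] by simp
  next
    case False thus ?thesis by (simp add: order_0I)
  qed
  have "Polynomial.order a (\<Prod>r\<leftarrow>r#rs. [:- r, 1:]) = Polynomial.order a [:- r, 1:] + Polynomial.order a (\<Prod>r\<leftarrow>rs. [:- r, 1:])"
    using nz by (simp add: order_mult del: mult_pCons_left)
  thus ?case using Cons o1 by auto
qed

definition tr :: "'a :: comm_ring_1 mat \<Rightarrow> 'a" where
  "tr M = (\<Sum>i<dim_row M. M $$ (i,i))"

lemma tr_comm:
  fixes X Y :: "'a :: comm_ring_1 mat"
  assumes "X \<in> carrier_mat n m" "Y \<in> carrier_mat m n"
  shows "tr (X * Y) = tr (Y * X)"
proof -
  have "tr (X * Y) = (\<Sum>i<n. \<Sum>j<m. X $$ (i,j) * Y $$ (j,i))"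
    using assms unfolding tr_def by (auto simp: scalar_prod_def lessThan_atLeast0 intro!: sum.cong)
  also have "\<dots> = (\<Sum>j<m. \<Sum>i<n. X $$ (i,j) * Y $$ (j,i))" by (rule sum.swap)
  also have "\<dots> = tr (Y * X)"
    using assms unfolding tr_def by (auto simp: scalar_prod_def lessThan_atLeast0 mult.commute intro!: sum.cong)
  finally show ?thesis .
qed

lemma tr_spectrum:
  fixes A :: "real mat"
  assumes A: "A \<in> carrier_mat n n"
    and cp: "char_poly A = (\<Prod>r\<leftarrow>rs. [:- r, 1:])"
  shows "tr A = sum_list rs" "tr (A * A) = sum_list (map (\<lambda>x. x^2) rs)"
proof -
  obtain B P Q where sd: "schur_decomposition A rs = (B,P,Q)" by (cases "schur_decomposition A rs") auto
  from schur_decomposition[OF A cp sd] have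
    sim: "similar_mat_wit A B P Q" and ut: "upper_triangular B" and dg: "diag_mat B = rs" by auto
  from sim A have car: "B \<in> carrier_mat n n" "P \<in> carrier_mat n n" "Q \<in> carrier_mat n n"
    and QP: "Q * P = 1\<^sub>m n" and AB: "A = P * B * Q"
    unfolding similar_mat_wit_def Let_def by auto
  have trB: "tr B = sum_list rs" unfolding dg[symmetric] diag_mat_def tr_def
    by (simp add: sum_list_sum_nth lessThan_atLeast0)
  have "tr A = tr ((P * B) * Q)" using AB by simp
  also have "\<dots> = tr (Q * (P * B))" by (rule tr_comm[of _ n n], insert car, auto)
  also have "Q * (P * B) = B"
  proof -
    have "Q * (P * B) = (Q * P) * B" using car by (simp add: assoc_mult_mat)
    thus ?thesis using QP car by simp
  qed
  finally show "tr A = sum_list rs" using trB by simp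
  have AA: "A * A = P * (B * B) * Q" using car QP unfolding AB
  proof -
    have "P * B * Q * (P * B * Q) = P * B * (Q * P) * B * Q" using car
      by (simp add: assoc_mult_mat[of _ n n _ n _ n])
    also have "\<dots> = P * (B * B) * Q" using car QP by (simp add: assoc_mult_mat[of _ n n _ n _ n])
    finally show "P * B * Q * (P * B * Q) = P * (B * B) * Q" .
  qed
  have "tr (A * A) = tr ((P * (B * B)) * Q)" using AA by simp
  also have "\<dots> = tr (Q * (P * (B * B)))" by (rule tr_comm[of _ n n], insert car, auto)
  also have "Q * (P * (B * B)) = B * B"
  proof -
    have "Q * (P * (B * B)) = (Q * P) * (B * B)" using car by (subst assoc_mult_mat[of Q n n P n "B*B" n]) auto
    thus ?thesis using QP car by simp
  qed
  also have "tr (B * B) = (\<Sum>i<n. (B $$ (i,i))^2)"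
  proof -
    have "(B * B) $$ (i,i) = (B $$ (i,i))^2" if i: "i < n" for i
    proof -
      have "(B * B) $$ (i,i) = (\<Sum>j\<in>{0..<n}. B $$ (i,j) * B $$ (j,i))"
        using car i by (simp add: scalar_prod_def)
      also have "\<dots> = (\<Sum>j\<in>{i}. B $$ (i,j) * B $$ (j,i))"
      proof (rule sum.mono_neutral_right)
        show "\<forall>j\<in>{0..<n} - {i}. B $$ (i, j) * B $$ (j, i) = 0"
        proof
          fix j assume j: "j \<in> {0..<n} - {i}"
          show "B $$ (i, j) * B $$ (j, i) = 0"
          proof (cases "j < i")
            case True thus ?thesis using ut car i unfolding upper_triangular_def by auto
          next
            case False thus ?thesis using ut car j unfolding upper_triangular_def by auto
          qed
        qed
      qed (use i in auto)
      finally show ?thesis by (simp add: power2_eq_square)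
    qed
    thus ?thesis using car unfolding tr_def by simp
  qed
  also have "\<dots> = sum_list (map (\<lambda>x. x^2) rs)" unfolding dg[symmetric] diag_mat_def
    using car by (simp add: sum_list_sum_nth lessThan_atLeast0)
  finally show "tr (A * A) = sum_list (map (\<lambda>x. x^2) rs)" .
qed



lemma monic_int_rat_root:
  fixes P :: "int poly" and p q :: int
  assumes dP: "degree P = d" and lc: "coeff P d = 1"
    and root: "poly (map_poly real_of_int P) (real_of_int p / real_of_int q) = 0"
    and q: "q > 0" and cop: "coprime p q"
  shows "q = 1"
proof -
  have degm: "degree (map_poly real_of_int P) = d" using dP by simp
  have "0 = (\<Sum>i\<le>d. real_of_int (coeff P i) * (real_of_int p / real_of_int q) ^ i)"
    using root unfolding poly_altdef degm by simp
  hence "0 = real_of_int q ^ d * (\<Sum>i\<le>d. real_of_int (coeff P i) * (real_of_int p / real_of_int q) ^ i)"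
    by simp
  also have "\<dots> = (\<Sum>i\<le>d. real_of_int (coeff P i * p ^ i * q ^ (d - i)))"
    unfolding sum_distrib_left
  proof (rule sum.cong[OF refl])
    fix i assume "i \<in> {..d}"
    hence i: "i \<le> d" by simp
    have "real_of_int q ^ d = real_of_int q ^ i * real_of_int q ^ (d - i)"
      using i by (simp add: power_add[symmetric])
    note qd = this
    have qq: "real_of_int q * (real_of_int p / real_of_int q) = real_of_int p" using q by simp
    have qpi: "real_of_int q ^ i * (real_of_int p / real_of_int q) ^ i = real_of_int p ^ i"
      by (metis power_mult_distrib qq)
    have "real_of_int q ^ d * (real_of_int (coeff P i) * (real_of_int p / real_of_int q) ^ i) =
      (real_of_int q ^ i * (real_of_int p / real_of_int q) ^ i) * real_of_int (coeff P i) * real_of_int q ^ (d - i)"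
      unfolding qd by (simp only: mult_ac)
    also have "\<dots> = real_of_int (coeff P i * p ^ i * q ^ (d - i))"
      unfolding qpi by (simp only: of_int_mult of_int_power mult_ac)
    finally show "real_of_int q ^ d * (real_of_int (coeff P i) * (real_of_int p / real_of_int q) ^ i) =
      real_of_int (coeff P i * p ^ i * q ^ (d - i))" .
  qed
  finally have "real_of_int (\<Sum>i\<le>d. coeff P i * p ^ i * q ^ (d - i)) = 0"
    unfolding of_int_sum by (rule sym)
  hence "(\<Sum>i\<le>d. coeff P i * p ^ i * q ^ (d - i)) = 0" by (simp only: of_int_eq_0_iff)
  moreover have "(\<Sum>i\<le>d. coeff P i * p ^ i * q ^ (d - i)) =
      (\<Sum>i<d. coeff P i * p ^ i * q ^ (d - i)) + coeff P d * p ^ d * q ^ (d - d)"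
    by (simp only: lessThan_Suc_atMost[symmetric] sum.lessThan_Suc)
  ultimately have eq: "p ^ d + (\<Sum>i<d. coeff P i * p ^ i * q ^ (d - i)) = 0"
    using lc by simp
  have "q dvd (\<Sum>i<d. coeff P i * p ^ i * q ^ (d - i))"
  proof (rule dvd_sum)
    fix i assume "i \<in> {..<d}"
    hence "q dvd q ^ (d - i)" by (intro dvd_power) simp
    thus "q dvd coeff P i * p ^ i * q ^ (d - i)" by (rule dvd_mult)
  qed
  moreover have "p ^ d = - (\<Sum>i<d. coeff P i * p ^ i * q ^ (d - i))"
    using eq by (simp add: eq_neg_iff_add_eq_0)
  ultimately have "q dvd p ^ d" by (simp only: dvd_minus_iff)
  moreover have "coprime (p ^ d) q" using cop by (simp only: coprime_power_left_iff simp_thms)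
  ultimately have "is_unit q" by (meson coprime_common_divisor dvd_refl)
  thus ?thesis using q by simp
qed



lemma sum_list_count_real:
  fixes f :: "'a \<Rightarrow> real"
  assumes "set xs \<subseteq> X" "finite X"
  shows "sum_list (map f xs) = (\<Sum>x\<in>X. real (count_list xs x) * f x)"
  using assms(1)
proof (induct xs)
  case Nil thus ?case by simp
next
  case (Cons a xs)
  hence a: "a \<in> X" and IH: "sum_list (map f xs) = (\<Sum>x\<in>X. real (count_list xs x) * f x)" by auto
  have "(\<Sum>x\<in>X. real (count_list (a # xs) x) * f x) =
    (\<Sum>x\<in>X. real (count_list xs x) * f x + (if a = x then f x else 0))"
    by (intro sum.cong) (auto simp: distrib_right)
  also have "\<dots> = (\<Sum>x\<in>X. real (count_list xs x) * f x) + f a"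
    using a assms(2) by (simp add: sum.distrib)
  finally show ?case using IH by simp
qed

lemma adj_facts:
  assumes sg: "simple_graph n E" and reg: "regular n E k"
  shows "adj_matrix n E \<in> carrier_mat n n"
    "\<And>i j. i < n \<Longrightarrow> j < n \<Longrightarrow> adj_matrix n E $$ (i,j) = adj_matrix n E $$ (j,i)"
    "tr (adj_matrix n E) = 0"
    "tr (adj_matrix n E * adj_matrix n E) = real n * real k"
proof -
  let ?A = "adj_matrix n E"
  show "?A \<in> carrier_mat n n" unfolding adj_matrix_def by simp
  have symE: "E i j = E j i" for i j using sg unfolding simple_graph_def by blast
  show "\<And>i j. i < n \<Longrightarrow> j < n \<Longrightarrow> ?A $$ (i,j) = ?A $$ (j,i)"
    unfolding adj_matrix_def using symE by simp
  show "tr ?A = 0" using sg unfolding tr_def adj_matrix_def simple_graph_def by simp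
  have diag: "(?A * ?A) $$ (i,i) = real k" if i: "i < n" for i
  proof -
    have "(?A * ?A) $$ (i,i) = (\<Sum>j\<in>{0..<n}. (if E i j then 1 else 0) * (if E j i then 1 else 0 :: real))"
      using i unfolding adj_matrix_def by (simp add: scalar_prod_def)
    also have "\<dots> = (\<Sum>j\<in>{0..<n}. (if E i j then 1 else 0 :: real))"
      using symE by (intro sum.cong) auto
    also have "\<dots> = real (card {j\<in>{0..<n}. E i j})"
      by (simp add: sum.If_cases Int_def)
    also have "{j\<in>{0..<n}. E i j} = {v. v < n \<and> E i v}" by auto
    also have "card \<dots> = k" using reg i unfolding regular_def by blast
    finally show ?thesis .
  qed
  show "tr (?A * ?A) = real n * real k"
    unfolding tr_def using diag by (simp add: adj_matrix_def)
qed



theorem theorem6: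
  fixes n k b a m2 m3 m4 :: nat and E :: "nat \<Rightarrow> nat \<Rightarrow> bool"
    and \<theta>2 \<theta>3 \<theta>4 :: real
  assumes "strongly_deza n E k b a"
    and "{\<theta>. eigenvalue (adj_matrix n E) \<theta>} = {real k, \<theta>2, \<theta>3, \<theta>4}"
    and "distinct [real k, \<theta>2, \<theta>3, \<theta>4]"
    and "eig_mult (adj_matrix n E) (real k) = 1"
    and "eig_mult (adj_matrix n E) \<theta>2 = m2"
    and "eig_mult (adj_matrix n E) \<theta>3 = m3"
    and "eig_mult (adj_matrix n E) \<theta>4 = m4"
    and "m2 > 0" and "m3 > 0" and "m4 > 0"
    and "\<theta>4 = - \<theta>3" and "m3 = m4"
  shows "\<theta>2 = - real k / real m2 \<and> \<theta>2 \<in> \<int> \<and> \<theta>2 \<le> -1 \<and>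
    (let r = sqrt (real k * (1 + (\<theta>2 + 1) * (real m2 + 1) / (real n - real m2 - 1)))
     in (\<theta>3 = r \<and> \<theta>4 = - r) \<or> (\<theta>3 = - r \<and> \<theta>4 = r))"
proof -
  let ?A = "adj_matrix n E"
  from assms(1) have sg: "simple_graph n E" and reg: "regular n E k" and ne: "\<not> edgeless E"
    unfolding strongly_deza_def deza_graph_def by auto
  note af = adj_facts[OF sg reg]
  obtain rs where cp: "char_poly ?A = (\<Prod>r\<leftarrow>rs. [:- r, 1:])" and len: "length rs = n"
    using real_sym_split[OF af(1) af(2)] by blast
  define S where "S = {real k, \<theta>2, \<theta>3, \<theta>4}"
  have finS: "finite S" unfolding S_def by simp
  have setrs: "set rs \<subseteq> S"
  proof
    fix r assume "r \<in> set rs"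
    hence "poly (char_poly ?A) r = 0" unfolding cp by (simp add: poly_prod_list prod_list_zero_iff)
    hence "eigenvalue ?A r" using eigenvalue_root_char_poly[OF af(1)] by simp
    thus "r \<in> S" using assms(2) unfolding S_def by blast
  qed
  have cnt: "count_list rs x = eig_mult ?A x" for x
    unfolding eig_mult_def cp order_linear_prod ..
  have sumS: "(\<Sum>x\<in>S. real (count_list rs x) * f x) =
     f (real k) + real m2 * f \<theta>2 + real m3 * f \<theta>3 + real m4 * f \<theta>4" for f :: "real \<Rightarrow> real"
    using assms(3-7) unfolding S_def cnt by (simp add: algebra_simps)
  have e1: "real n = 1 + real m2 + real m3 + real m4"
    using sum_list_count_real[OF setrs finS, of "\<lambda>_. 1"] sumS[of "\<lambda>_. 1"] len
    by (simp add: sum_list_triv)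
  have e2: "0 = real k + real m2 * \<theta>2 + real m3 * \<theta>3 + real m4 * \<theta>4"
    using sum_list_count_real[OF setrs finS, of "\<lambda>x. x"] sumS[of "\<lambda>x. x"]
      tr_spectrum(1)[OF af(1) cp] af(3) by simp
  have e3: "real n * real k = (real k)^2 + real m2 * \<theta>2^2 + real m3 * \<theta>3^2 + real m4 * \<theta>4^2"
    using sum_list_count_real[OF setrs finS, of "\<lambda>x. x^2"] sumS[of "\<lambda>x. x^2"]
      tr_spectrum(2)[OF af(1) cp] af(4) by simp
  have m2pos: "real m2 > 0" using assms(8) by simp
  have th2: "\<theta>2 = - real k / real m2"
    using e2 assms(11,12) m2pos by (simp add: field_simps)
  have kpos: "k > 0"
  proof -
    from ne obtain u v where uv: "E u v" unfolding edgeless_def by blast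
    with sg have "u < n" "v < n" unfolding simple_graph_def by auto
    with reg have "card {w. w < n \<and> E u w} = k" unfolding regular_def by blast
    moreover have "v \<in> {w. w < n \<and> E u w}" using uv \<open>v < n\<close> by simp
    moreover have "finite {w. w < n \<and> E u w}" by simp
    ultimately show ?thesis by (metis card_gt_0_iff empty_iff)
  qed
  have th2neg: "\<theta>2 < 0" unfolding th2 using kpos m2pos by (simp add: zero_less_divide_iff)
  have th2int: "\<theta>2 \<in> \<int>"
  proof -
    define Ai :: "int mat" where "Ai = mat n n (\<lambda>(i,j). if E i j then 1 else 0)"
    have Ai: "Ai \<in> carrier_mat n n" unfolding Ai_def by simp
    have AAi: "?A = map_mat real_of_int Ai"
      unfolding Ai_def adj_matrix_def by (rule eq_matI) auto
    have cpi: "char_poly ?A = map_poly real_of_int (char_poly Ai)"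
      unfolding AAi by (rule of_int_hom.char_poly_hom[OF Ai])
    have "eigenvalue ?A \<theta>2" using assms(2) by blast
    hence root: "poly (map_poly real_of_int (char_poly Ai)) \<theta>2 = 0"
      using eigenvalue_root_char_poly[OF af(1)] cpi by simp
    define g where "g = gcd (int k) (int m2)"
    have gpos: "g > 0" unfolding g_def using kpos by simp
    define p where "p = - (int k div g)"
    define q where "q = int m2 div g"
    have kg: "int k = g * (int k div g)" unfolding g_def by simp
    have mg: "int m2 = g * q" unfolding g_def q_def by simp
    have qpos: "q > 0" using mg gpos assms(8)
      by (metis of_nat_0_less_iff zero_less_mult_pos)
    have cop: "coprime p q" unfolding p_def q_def g_def
      using div_gcd_coprime[of "int k" "int m2"] kpos by simp
    have "real_of_int p / real_of_int q = - real k / real m2"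
    proof -
      have "real k = real_of_int g * real_of_int (int k div g)"
        by (metis kg of_int_mult of_int_of_nat_eq)
      moreover have "real m2 = real_of_int g * real_of_int q"
        by (metis mg of_int_mult of_int_of_nat_eq)
      ultimately show ?thesis unfolding p_def using gpos by simp
    qed
    hence th2pq: "\<theta>2 = real_of_int p / real_of_int q" using th2 by simp
    from degree_monic_char_poly[OF Ai] have "degree (char_poly Ai) = n" "coeff (char_poly Ai) n = 1"
      by auto
    from monic_int_rat_root[OF this root[unfolded th2pq] qpos cop] have "q = 1" .
    thus ?thesis using th2pq by simp
  qed
  have th2le: "\<theta>2 \<le> -1"
  proof -
    from th2int obtain z where z: "\<theta>2 = of_int z" by (auto elim: Ints_cases)
    with th2neg have "z < 0" by simp
    with z show ?thesis by simp
  qed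
  define V where "V = real k * (1 + (\<theta>2 + 1) * (real m2 + 1) / (real n - real m2 - 1))"
  have m3pos: "real m3 > 0" using assms(9) by simp
  have den: "real n - real m2 - 1 = 2 * real m3" using e1 assms(12) by simp
  have "\<theta>3^2 = V"
  proof -
    have "2 * real m3 * \<theta>3^2 = real n * real k - (real k)^2 - real m2 * \<theta>2^2"
      using e3 assms(11,12) by (simp add: algebra_simps)
    also have "real m2 * \<theta>2^2 = - real k * \<theta>2"
      using th2 m2pos by (simp add: power2_eq_square field_simps)
    finally have h: "2 * real m3 * \<theta>3^2 = real n * real k - (real k)^2 + real k * \<theta>2" by simp
    have "2 * real m3 * V = real k * (2 * real m3 + (\<theta>2 + 1) * (real m2 + 1))"
      unfolding V_def den using m3pos by (simp add: field_simps)
    also have "\<dots> = real n * real k - (real k)^2 + real k * \<theta>2"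
    proof -
      have "real m2 * \<theta>2 = - real k" using th2 m2pos by (simp add: field_simps)
      thus ?thesis using e1 assms(12) by (simp add: algebra_simps power2_eq_square)
    qed
    finally have "(2 * real m3) * \<theta>3^2 = (2 * real m3) * V" using h by simp
    moreover have "2 * real m3 \<noteq> 0" using m3pos by simp
    ultimately show ?thesis by simp
  qed
  hence "sqrt V = \<bar>\<theta>3\<bar>" by (metis real_sqrt_abs)
  hence "(\<theta>3 = sqrt V \<and> \<theta>4 = - sqrt V) \<or> (\<theta>3 = - sqrt V \<and> \<theta>4 = sqrt V)"
    using assms(11) by (cases "\<theta>3 \<ge> 0") auto
  thus ?thesis using th2 th2int th2le unfolding V_def Let_def by blast
qed


end
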